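(* Let $n\geq 3$ and let $S_n$ be the star graph with vertices $a_1,\dots,a_n$ and center $a_1$. For every $p\in(1,2]$, $$\|M_{S_n}\|_p=\left(\sup_{x\in[0,1)}\frac{1+(n-1)\left(\frac{x+1}{2}\right)^p}{1+(n-1)x^p}\right)^{1/p}.$$
   Context: For a finite connected graph $G=(V,E)$ with graph distance $d_G$ and $f:V\to\mathbb{R}$, the centered Hardy–Littlewood maximal function is $M_Gf(v)=\sup_{r\geq 0}\frac{1}{|B(v,r)|}\sum_{u\in B(v,r)}|f(u)|$, where $B(v,r)=\{u\in V: d_G(u,v)\le r\}$ and $|\cdot|$ is cardinality. For $g:V\to\mathbb{R}$, $\|g\|_p=(\sum_{v\in V}|g(v)|^p)^{1/p}$, and $\|M_G\|_p=\sup_{f\neq 0}\|M_Gf\|_p/\|f\|_p$. The star graph $S_n$ has vertices $a_1,\dots,a_n$ and edges exactly between $a_1$ and each $a_i$, $i\ge 2$. *)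

theory Defs
  imports "HOL-Analysis.Analysis"
begin

text \<open>A finite graph is given by a vertex set V and a symmetric, irreflexive
adjacency relation E.  A walk is a nonempty list of vertices of V with consecutive
vertices adjacent.\<close>

definition is_walk :: "'a set \<Rightarrow> ('a \<Rightarrow> 'a \<Rightarrow> bool) \<Rightarrow> 'a list \<Rightarrow> bool" where
  "is_walk V E xs \<longleftrightarrow> xs \<noteq> [] \<and> set xs \<subseteq> V \<and>
     (\<forall>i. Suc i < length xs \<longrightarrow> E (xs ! i) (xs ! Suc i))"

definition graph_dist :: "'a set \<Rightarrow> ('a \<Rightarrow> 'a \<Rightarrow> bool) \<Rightarrow> 'a \<Rightarrow> 'a \<Rightarrow> nat" where
  "graph_dist V E u v = (LEAST k. \<exists>xs. is_walk V E xs \<and> hd xs = u \<and> last xs = v \<and> length xs = Suc k)"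

definition graph_ball :: "'a set \<Rightarrow> ('a \<Rightarrow> 'a \<Rightarrow> bool) \<Rightarrow> 'a \<Rightarrow> real \<Rightarrow> 'a set" where
  "graph_ball V E v r = {u \<in> V. real (graph_dist V E u v) \<le> r}"

definition maximal_fun :: "'a set \<Rightarrow> ('a \<Rightarrow> 'a \<Rightarrow> bool) \<Rightarrow> ('a \<Rightarrow> real) \<Rightarrow> 'a \<Rightarrow> real" where
  "maximal_fun V E f v = (SUP r \<in> {0..}. (\<Sum>u \<in> graph_ball V E v r. \<bar>f u\<bar>) / real (card (graph_ball V E v r)))"

definition pnorm :: "'a set \<Rightarrow> real \<Rightarrow> ('a \<Rightarrow> real) \<Rightarrow> real" where
  "pnorm V p g = (\<Sum>v \<in> V. \<bar>g v\<bar> powr p) powr (1 / p)"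

text \<open>Operator norm of the maximal operator on l^p(V) (functions on V; values
outside V are irrelevant).\<close>
definition maximal_op_norm :: "'a set \<Rightarrow> ('a \<Rightarrow> 'a \<Rightarrow> bool) \<Rightarrow> real \<Rightarrow> real" where
  "maximal_op_norm V E p = (SUP f \<in> {f. \<exists>v \<in> V. f v \<noteq> 0}.
      pnorm V p (maximal_fun V E f) / pnorm V p f)"

text \<open>Star graph S_n: vertices 1..n (a_i is i), center 1.\<close>
definition star_V :: "nat \<Rightarrow> nat set" where
  "star_V n = {1..n}"

definition star_E :: "nat \<Rightarrow> nat \<Rightarrow> nat \<Rightarrow> bool" where
  "star_E n i j \<longleftrightarrow> i \<in> {1..n} \<and> j \<in> {1..n} \<and> ((i = 1 \<and> j \<ge> 2) \<or> (j = 1 \<and> i \<ge> 2))"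

end

theory Submission
  imports Defs
begin


lemma powr_convex0:
  fixes p :: real assumes "p \<ge> 1"
  shows "convex_on {0..} (\<lambda>x::real. x powr p)"
proof (rule convex_onI)
  show "convex {0::real..}" by simp
  fix t x y :: real
  assume t: "0 < t" "t < 1" and x: "x \<in> {0..}" and y: "y \<in> {0..}"
  show "((1 - t) *\<^sub>R x + t *\<^sub>R y) powr p \<le> (1 - t) * x powr p + t * y powr p"
  proof (cases "x = 0 \<or> y = 0")
    case False
    then have "x \<in> {0<..}" "y \<in> {0<..}" using x y by auto
    from convex_onD[OF powr_convex[OF assms] _ _ this] t show ?thesis by simp
  next
    case True
    then show ?thesis
    proof
      assume x0: "x = 0"
      have "(t * y) powr p = t powr p * y powr p" using t y by (simp add: powr_mult)
      also have "\<dots> \<le> t * y powr p"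
      proof (rule mult_right_mono)
        show "t powr p \<le> t" using t assms
          using powr_le_one_le[of t p] by simp
      qed simp
      finally show ?thesis using x0 by simp
    next
      assume y0: "y = 0"
      have "((1-t) * x) powr p = (1-t) powr p * x powr p" using t x by (simp add: powr_mult)
      also have "\<dots> \<le> (1-t) * x powr p"
      proof (rule mult_right_mono)
        show "(1-t) powr p \<le> (1-t)" using t assms
          using powr_le_one_le[of "1-t" p] by simp
      qed simp
      finally show ?thesis using y0 by simp
    qed
  qed
qed

lemma convex2:
  fixes p u v w :: real assumes "p \<ge> 1" "0 \<le> w" "w \<le> 1" "0 \<le> u" "0 \<le> v"
  shows "((1 - w) * u + w * v) powr p \<le> (1 - w) * u powr p + w * v powr p"
  using convex_onD[OF powr_convex0[OF assms(1)], of w u v] assms by simp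

lemma midpoint_powr:
  fixes p u v :: real assumes "p \<ge> 1" "0 \<le> u" "0 \<le> v"
  shows "((u + v) / 2) powr p \<le> (u powr p + v powr p) / 2"
  using convex2[OF assms(1), of "1/2" u v] assms by (simp add: field_simps)

lemma power_mean:
  fixes x :: "'a \<Rightarrow> real" and p :: real
  assumes "p \<ge> 1" "finite S" "S \<noteq> {}" "\<And>i. i \<in> S \<Longrightarrow> 0 \<le> x i"
  shows "((\<Sum>i\<in>S. x i) / card S) powr p \<le> (\<Sum>i\<in>S. x i powr p) / card S"
proof -
  have cpos: "real (card S) > 0" using assms by (simp add: card_gt_0_iff)
  have "(\<Sum>i\<in>S. (1 / card S) *\<^sub>R x i) powr p \<le> (\<Sum>i\<in>S. (1 / card S) * x i powr p)"
    using convex_on_sum[OF assms(2,3) powr_convex0[OF assms(1)], of "\<lambda>i. 1 / card S" x]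
    using assms cpos by simp
  moreover have "(\<Sum>i\<in>S. (1 / card S) *\<^sub>R x i) = (\<Sum>i\<in>S. x i) / card S"
    by (simp add: sum_divide_distrib)
  moreover have "(\<Sum>i\<in>S. (1 / card S) * x i powr p) = (\<Sum>i\<in>S. x i powr p) / card S"
    by (simp add: sum_divide_distrib)
  ultimately show ?thesis by simp
qed

lemma tangent_powr:
  fixes p x y :: real assumes "p \<ge> 1" "0 < x" "0 \<le> y"
  shows "x powr p + p * x powr (p - 1) * (y - x) \<le> y powr p"
proof -
  have d: "((\<lambda>x. x powr p) has_field_derivative p * x powr (p - 1)) (at x within {0..})"
    using assms by (auto intro!: derivative_eq_intros)
  have "y powr p - x powr p \<ge> p * x powr (p - 1) * (y - x)"
    by (rule convex_on_imp_above_tangent[OF powr_convex0[OF assms(1)] _ _ _ d])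
       (use assms in \<open>auto\<close>)
  then show ?thesis by simp
qed

lemma half_powr_ge: fixes p :: real assumes "p \<le> 2" shows "(1/2::real) powr p \<ge> 1/4"
proof -
  have "(1/2::real) powr 2 \<le> (1/2) powr p" by (rule powr_mono') (use assms in auto)
  moreover have "(1/2::real) powr 2 = 1/4" by (simp add: powr_numeral power2_eq_square)
  ultimately show ?thesis by simp
qed

lemma final_arith:
  fixes X W s t C :: real
  assumes X: "X \<ge> 0" and W: "W \<ge> X / 4" and s1: "1 \<le> s" and st: "s \<le> t"
    and C: "C \<ge> 1 + (s + t) / 4"
  shows "X + s * W + t * X / 2 + t * W / 2 \<le> C * (X + t * W)"
proof -
  have W0: "W \<ge> 0" using W X by linarith
  have XtW: "X + t * W \<ge> 0" using X W0 st s1 by simp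
  have "(1 + (s + t) / 4) * (X + t * W) \<le> C * (X + t * W)"
    by (rule mult_right_mono[OF C XtW])
  moreover
  define K where "K = t / 2 + t * (s + t) / 4 - s"
  have K0: "K \<ge> 0"
  proof -
    have "t * (s + t - 2) \<ge> 0" using s1 st by simp
    then have "t * (s + t) / 4 \<ge> t / 2" by (simp add: algebra_simps)
    then show ?thesis unfolding K_def using st by linarith
  qed
  have WK: "W * K \<ge> X / 4 * K" by (rule mult_right_mono[OF W K0])
  have eq: "(1 + (s + t) / 4) * (X + t * W) - (X + s * W + t * X / 2 + t * W / 2)
      = X * (s - t) / 4 + W * K"
    unfolding K_def by (simp add: field_simps)
  have "X * (s - t) / 4 + X / 4 * K = X * (t * (s + t - 2)) / 16"
    unfolding K_def by (simp add: field_simps)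
  moreover have "X * (t * (s + t - 2)) / 16 \<ge> 0" using X s1 st by simp
  ultimately show ?thesis using eq WK by linarith
qed

locale star_ineq =
  fixes L :: "'a set" and p C :: real
  assumes finL: "finite L" and m2: "2 \<le> card L" and p1: "1 < p" and p2: "p \<le> 2"
  and HC: "\<And>x. 0 \<le> x \<Longrightarrow> x < 1 \<Longrightarrow>
      1 + real (card L) * ((x + 1) / 2) powr p \<le> C * (1 + real (card L) * x powr p)"
begin

definition Av :: "real \<Rightarrow> ('a \<Rightarrow> real) \<Rightarrow> real" where
  "Av a b = (a + sum b L) / (real (card L) + 1)"

definition Nf :: "real \<Rightarrow> ('a \<Rightarrow> real) \<Rightarrow> real" where
  "Nf a b = max a (Av a b) powr p + (\<Sum>i\<in>L. max (max (b i) ((a + b i) / 2)) (Av a b) powr p)"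

definition Pf :: "real \<Rightarrow> ('a \<Rightarrow> real) \<Rightarrow> real" where
  "Pf a b = a powr p + (\<Sum>i\<in>L. b i powr p)"

lemma C_ge_h: "C \<ge> 1 + real (card L) * (1/2) powr p"
  using HC[of 0] p1 by simp

lemma C_ge: "C \<ge> 1 + real (card L) / 4"
proof -
  have "real (card L) * (1/4) \<le> real (card L) * (1/2) powr p"
    by (rule mult_left_mono) (use half_powr_ge[OF p2] in auto)
  then show ?thesis using C_ge_h by simp
qed

lemma C_ge1: "C \<ge> 1" using C_ge by (smt (verit) of_nat_0_le_iff divide_nonneg_nonneg)

lemma local_leaf:
  assumes "0 \<le> bb" "bb \<le> a"
  shows "((a + bb) / 2) powr p \<le> C * bb powr p + (C - 1) / real (card L) * a powr p"
proof (cases "bb = a")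
  case True
  have "(C - 1) / real (card L) * a powr p \<ge> 0" using C_ge1 by simp
  moreover have "a powr p \<le> C * a powr p" using C_ge1 mult_right_mono[of 1 C "a powr p"] by simp
  ultimately show ?thesis using True by simp
next
  case False
  then have a0: "a > 0" and ba: "bb < a" using assms by auto
  define x where "x = bb / a"
  have x0: "0 \<le> x" and x1: "x < 1" using assms a0 ba by (auto simp: x_def)
  have m0: "real (card L) > 0" using m2 by simp
  have H: "1 + real (card L) * ((x + 1) / 2) powr p \<le> C * (1 + real (card L) * x powr p)"
    using HC[OF x0 x1] .
  then have "((x + 1) / 2) powr p \<le> C * x powr p + (C - 1) / real (card L)"
    using m0 by (simp add: field_simps)
  then have "a powr p * ((x + 1) / 2) powr p \<le> a powr p * (C * x powr p + (C - 1) / real (card L))"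
    by (rule mult_left_mono) simp
  moreover have "a powr p * ((x + 1) / 2) powr p = ((a + bb) / 2) powr p"
  proof -
    have "a * ((x + 1) / 2) = (a + bb) / 2" using a0 by (simp add: x_def field_simps)
    then show ?thesis using a0 x0 by (simp add: powr_mult[symmetric])
  qed
  moreover have "a powr p * x powr p = bb powr p"
    using a0 x0 assms by (simp add: powr_mult[symmetric] x_def)
  ultimately show ?thesis by (simp add: algebra_simps)
qed

lemma capped:
  assumes a0: "0 \<le> a" and b0: "\<And>i. i \<in> L \<Longrightarrow> 0 \<le> b i"
    and ba: "\<And>i. i \<in> L \<Longrightarrow> b i \<le> a"
  shows "Nf a b \<le> C * Pf a b"
proof -
  define m where "m = real (card L)"
  define A where "A = Av a b"
  have m2': "m \<ge> 2" using m2 by (simp add: m_def)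
  have sumle: "sum b L \<le> m * a"
    using sum_bounded_above[of L b a] ba by (simp add: m_def)
  have nA: "(m + 1) * A = a + sum b L" using m2' by (simp add: A_def Av_def m_def)
  have Ale: "A \<le> a"
  proof -
    have "(m + 1) * A \<le> (m + 1) * a" using nA sumle by (simp add: algebra_simps)
    then show ?thesis using m2' by simp
  qed
  have sum0: "sum b L \<ge> 0" using b0 by (simp add: sum_nonneg)
  have A0: "0 \<le> A" using a0 sum0 m2' by (simp add: A_def Av_def)
  have center: "max a A = a" using Ale by simp
  have leafeq: "max (max (b i) ((a + b i) / 2)) A = max ((a + b i) / 2) A" if "i \<in> L" for i
    using ba[OF that] by simp
  have NfA: "Nf a b = a powr p + (\<Sum>i\<in>L. max ((a + b i) / 2) A powr p)"
    unfolding Nf_def A_def[symmetric] center using leafeq by simp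
  define S where "S = {i\<in>L. (a + b i) / 2 < A}"
  have pp: "p \<ge> 1" using p1 by simp
  have Cm: "real (card L) * ((C - 1) / real (card L)) = C - 1" using m2 by simp
  show ?thesis
  proof (cases "S = {}")
    case True
    have "(\<Sum>i\<in>L. max ((a + b i) / 2) A powr p)
        \<le> (\<Sum>i\<in>L. C * b i powr p + (C - 1) / real (card L) * a powr p)"
    proof (rule sum_mono)
      fix i assume i: "i \<in> L"
      then have "\<not> (a + b i) / 2 < A" using True by (auto simp: S_def)
      then have "max ((a + b i) / 2) A = (a + b i) / 2" by simp
      then show "max ((a + b i) / 2) A powr p \<le> C * b i powr p + (C - 1) / real (card L) * a powr p"
        using local_leaf[OF b0[OF i] ba[OF i]] by simp
    qed
    also have "\<dots> = C * (\<Sum>i\<in>L. b i powr p) + real (card L) * ((C - 1) / real (card L) * a powr p)"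
      by (simp add: sum.distrib sum_distrib_left)
    also have "\<dots> = C * (\<Sum>i\<in>L. b i powr p) + (C - 1) * a powr p"
      using Cm m2 by (simp add: mult.assoc[symmetric])
    finally show ?thesis unfolding NfA Pf_def by (simp add: algebra_simps)
  next
    case False
    define T where "T = L - S"
    have SL: "S \<subseteq> L" by (auto simp: S_def)
    have finS: "finite S" using finL SL by (rule rev_finite_subset)
    have finT: "finite T" using finL by (simp add: T_def)
    have split: "sum g L = sum g S + sum g T" for g :: "'a \<Rightarrow> real"
      using sum.subset_diff[OF SL finL, of g] by (simp add: T_def)
    define s where "s = real (card S)"
    define t where "t = real (card T)"
    have cardST: "card S + card T = card L"
      using card_Diff_subset[OF finS SL] card_mono[OF finL SL] by (simp add: T_def)
    have stm: "s + t = m" using cardST by (simp add: s_def t_def m_def flip: of_nat_add)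
    have s1: "s \<ge> 1" using False finS by (simp add: s_def Suc_le_eq card_gt_0_iff)
    have Sprop: "b i < 2 * A - a" if "i \<in> S" for i using that by (auto simp: S_def)
    have Tprop: "2 * A - a \<le> b i" if "i \<in> T" for i using that by (auto simp: S_def T_def)
    have TL: "T \<subseteq> L" by (auto simp: T_def)
    obtain i0 where i0: "i0 \<in> S" using False by auto
    have Ahalf: "A > a / 2" using i0 b0[of i0] SL by (auto simp: S_def)
    have sumS: "sum b S < s * (2 * A - a)"
    proof -
      have "sum b S < (\<Sum>i\<in>S. 2 * A - a)"
        by (rule sum_strict_mono[OF finS False]) (rule Sprop)
      then show ?thesis by (simp add: s_def)
    qed
    have sumT: "sum b T \<le> t * a"
      using sum_bounded_above[of T b a] ba TL by (auto simp: t_def)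
    have nA2: "(m + 1) * A = a + sum b S + sum b T" using nA split[of b] by simp
    have Tne: "T \<noteq> {}"
    proof
      assume T0: "T = {}"
      then have "t = 0" by (simp add: t_def)
      then have "s = m" using stm by simp
      have h1: "(m - 1) * (a - A) \<ge> 0" using m2' Ale by simp
      have e1: "(m - 1) * (a - A) = m * a - m * A - a + A" by (simp add: algebra_simps)
      have e2: "(m + 1) * A = m * A + A" by (simp add: algebra_simps)
      have e3: "s * (2 * A - a) = 2 * (m * A) - m * a" using \<open>s = m\<close> by (simp add: algebra_simps)
      have sT: "sum b T = 0" using T0 by simp
      have h2: "(m + 1) * A < a + s * (2 * A - a)" using nA2 sumS sT by simp
      have h3: "m * A + A < a + 2 * (m * A) - m * a" using h2 e2 e3 by simp
      have h4: "m * a - m * A - a + A \<ge> 0" using h1 e1 by simp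
      show False using h3 h4 by linarith
    qed
    have t1: "t \<ge> 1" using Tne finT by (simp add: t_def Suc_le_eq card_gt_0_iff)
    have st: "s \<le> t"
    proof (rule ccontr)
      assume "\<not> s \<le> t"
      then have "card T < card S" by (simp add: s_def t_def)
      then have "2 * card S \<ge> card L + 1" using cardST by simp
      then have "real (card L + 1) \<le> real (2 * card S)" by (simp only: of_nat_le_iff)
      then have "2 * s \<ge> m + 1" unfolding s_def m_def by simp
      then have h1: "(2 * s - m - 1) * (a - A) \<ge> 0" using Ale by simp
      have h2: "(m + 1) * A < a + s * (2 * A - a) + t * a" using nA2 sumS sumT by linarith
      have tm: "t = m - s" using stm by simp
      have e1: "(2 * s - m - 1) * (a - A) = 2 * (s * a) - 2 * (s * A) - m * a + m * A - a + A"
        by (simp add: algebra_simps)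
      have e2: "a + s * (2 * A - a) + t * a = a + 2 * (s * A) - s * a + m * a - s * a"
        unfolding tm by (simp add: algebra_simps)
      have e3: "(m + 1) * A = m * A + A" by (simp add: algebra_simps)
      show False using h1 h2 e1 e2 e3 by linarith
    qed
    define c where "c = sum b T / t"
    have sumTc: "sum b T = t * c" using t1 by (simp add: c_def)
    have Ac: "A < c"
    proof (rule ccontr)
      assume "\<not> A < c"
      then have "t * c \<le> t * A" using t1 by (simp add: mult_left_mono)
      then have h2: "(m + 1) * A < a + s * (2 * A - a) + t * A" using nA2 sumS sumTc by linarith
      have h1: "(s - 1) * (a - A) \<ge> 0" using s1 Ale by simp
      have tm: "t = m - s" using stm by simp
      have e1: "(s - 1) * (a - A) = s * a - s * A - a + A" by (simp add: algebra_simps)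
      have e2: "a + s * (2 * A - a) + t * A = a + 2 * (s * A) - s * a + m * A - s * A"
        unfolding tm by (simp add: algebra_simps)
      have e3: "(m + 1) * A = m * A + A" by (simp add: algebra_simps)
      show False using h1 h2 e1 e2 e3 by linarith
    qed
    have chalf: "c > a / 2" using Ac Ahalf by simp
    define W where "W = (\<Sum>i\<in>T. b i powr p) / t"
    have sumTW: "(\<Sum>i\<in>T. b i powr p) = t * W" using t1 by (simp add: W_def)
    have cW: "c powr p \<le> W"
      using power_mean[OF pp finT Tne, of b] b0 TL by (auto simp: c_def W_def t_def)
    have Ap: "A powr p \<le> W"
    proof -
      have "A powr p \<le> c powr p" using A0 Ac p1 by (simp add: powr_mono2)
      then show ?thesis using cW by simp
    qed
    have Wa: "W \<ge> a powr p / 4"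
    proof -
      have "(a / 2) powr p \<le> c powr p" using a0 chalf p1 by (simp add: powr_mono2)
      moreover have "(a / 2) powr p = a powr p * (1/2) powr p" using a0 by (simp add: powr_mult[symmetric])
      moreover have "a powr p * (1/4) \<le> a powr p * (1/2) powr p"
        by (rule mult_left_mono) (use half_powr_ge[OF p2] in auto)
      ultimately show ?thesis using cW by simp
    qed
    have NS: "(\<Sum>i\<in>S. max ((a + b i) / 2) A powr p) = s * A powr p"
    proof -
      have "(\<Sum>i\<in>S. max ((a + b i) / 2) A powr p) = (\<Sum>i\<in>S. A powr p)"
        by (rule sum.cong) (auto simp: S_def)
      then show ?thesis by (simp add: s_def)
    qed
    have NT: "(\<Sum>i\<in>T. max ((a + b i) / 2) A powr p) \<le> t * a powr p / 2 + t * W / 2"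
    proof -
      have "(\<Sum>i\<in>T. max ((a + b i) / 2) A powr p) = (\<Sum>i\<in>T. ((a + b i) / 2) powr p)"
        by (rule sum.cong) (auto simp: S_def T_def)
      also have "\<dots> \<le> (\<Sum>i\<in>T. (a powr p + b i powr p) / 2)"
        by (rule sum_mono, rule midpoint_powr) (use pp a0 b0 TL in auto)
      also have "\<dots> = t * a powr p / 2 + (\<Sum>i\<in>T. b i powr p) / 2"
        by (simp add: sum.distrib t_def add_divide_distrib sum_divide_distrib)
      finally show ?thesis using sumTW by simp
    qed
    have Nle: "Nf a b \<le> a powr p + s * W + t * a powr p / 2 + t * W / 2"
    proof -
      have "Nf a b = a powr p + s * A powr p + (\<Sum>i\<in>T. max ((a + b i) / 2) A powr p)"
        unfolding NfA using split NS by simp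
      moreover have "s * A powr p \<le> s * W" using Ap s1 by simp
      ultimately show ?thesis using NT by linarith
    qed
    have Pge: "Pf a b \<ge> a powr p + t * W"
    proof -
      have "(\<Sum>i\<in>S. b i powr p) \<ge> 0" by (simp add: sum_nonneg)
      then show ?thesis unfolding Pf_def using split[of "\<lambda>i. b i powr p"] sumTW by simp
    qed
    have "a powr p + s * W + t * a powr p / 2 + t * W / 2 \<le> C * (a powr p + t * W)"
      by (rule final_arith) (use Wa s1 st C_ge stm in \<open>auto simp: m_def\<close>)
    also have "\<dots> \<le> C * Pf a b" using Pge C_ge1 by (simp add: mult_left_mono)
    finally show ?thesis using Nle by linarith
  qed
qed

lemma maxdiff:
  assumes "0 \<le> A'" "A' \<le> A" "0 \<le> X"
  shows "max X A powr p \<le> max X A' powr p + (A powr p - A' powr p)"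
proof (cases "A \<le> X")
  case True
  then have "max X A = X" "max X A' = X" using assms by auto
  moreover have "A' powr p \<le> A powr p" using assms p1 by (simp add: powr_mono2)
  ultimately show ?thesis by simp
next
  case False
  then have "max X A = A" by simp
  moreover have "A' powr p \<le> max X A' powr p" using assms p1 by (simp add: powr_mono2)
  ultimately show ?thesis by simp
qed

lemma caseI:
  assumes a0: "0 \<le> a" and b0: "\<And>i. i \<in> L \<Longrightarrow> 0 \<le> b i" and Aa: "Av a b \<le> a"
  shows "Nf a b \<le> C * Pf a b"
proof -
  define B where "B = {i\<in>L. a < b i}"
  show ?thesis
  proof (cases "B = {}")
    case True
    have "b i \<le> a" if "i \<in> L" for i
    proof (rule ccontr)
      assume "\<not> b i \<le> a"
      then have "i \<in> B" using that by (simp add: B_def)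
      then show False using True by simp
    qed
    then show ?thesis using capped[of a b] a0 b0 by blast
  next
    case False
    define m where "m = real (card L)"
    have m2': "m \<ge> 2" using m2 by (simp add: m_def)
    define b' where "b' = (\<lambda>i. min (b i) a)"
    define A where "A = Av a b"
    define A' where "A' = Av a b'"
    have BL: "B \<subseteq> L" by (auto simp: B_def)
    have finB: "finite B" using finL BL by (rule rev_finite_subset)
    have split: "sum g L = sum g B + sum g (L - B)" for g :: "'a \<Rightarrow> real"
      using sum.subset_diff[OF BL finL, of g] by simp
    have b'B: "b' i = a" if "i \<in> B" for i using that by (auto simp: B_def b'_def)
    have b'nB: "b' i = b i" if "i \<in> L - B" for i using that by (auto simp: B_def b'_def)
    have b'0: "0 \<le> b' i" if "i \<in> L" for i using b0[OF that] a0 by (simp add: b'_def)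
    have b'a: "b' i \<le> a" if "i \<in> L" for i by (simp add: b'_def)
    have cap: "Nf a b' \<le> C * Pf a b'" by (rule capped[OF a0 b'0 b'a])
    define E where "E = (\<Sum>i\<in>B. b i - a)"
    have E0: "E \<ge> 0" unfolding E_def by (rule sum_nonneg) (auto simp: B_def)
    have sumbb': "sum b L = sum b' L + E"
    proof -
      have "sum b' L = sum b' B + sum b' (L - B)" by (rule split)
      also have "\<dots> = (\<Sum>i\<in>B. a) + sum b (L - B)" using b'B b'nB by simp
      finally have "sum b' L = (\<Sum>i\<in>B. a) + sum b (L - B)" .
      moreover have "sum b L = sum b B + sum b (L - B)" by (rule split)
      moreover have "E = sum b B - (\<Sum>i\<in>B. a)" by (simp add: E_def sum_subtractf)
      ultimately show ?thesis by simp
    qed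
    have AA': "A - A' = E / (m + 1)"
    proof -
      have "A - A' = ((a + sum b L) - (a + sum b' L)) / (m + 1)"
        unfolding A_def A'_def Av_def m_def by (rule diff_divide_distrib[symmetric])
      then show ?thesis using sumbb' by simp
    qed
    have A'A: "A' \<le> A" using AA' E0 m2' by (smt (verit) divide_nonneg_nonneg)
    have Aa': "A \<le> a" using Aa by (simp add: A_def)
    have A'0: "0 \<le> A'" using a0 b'0 m2' by (simp add: A'_def Av_def sum_nonneg)
    obtain i0 where i0: "i0 \<in> B" using False by auto
    define G where "G = (\<Sum>i\<in>B. b i powr p - a powr p)"
    have G0: "G \<ge> 0" unfolding G_def
      by (rule sum_nonneg) (use a0 p1 in \<open>auto simp: B_def powr_mono2\<close>)
    have Pdiff: "Pf a b = Pf a b' + G"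
    proof -
      have "(\<Sum>i\<in>L. b i powr p) = (\<Sum>i\<in>B. b i powr p) + (\<Sum>i\<in>L - B. b i powr p)" by (rule split)
      moreover have "(\<Sum>i\<in>L. b' i powr p) = (\<Sum>i\<in>B. a powr p) + (\<Sum>i\<in>L - B. b i powr p)"
        using split[of "\<lambda>i. b' i powr p"] b'B b'nB by simp
      moreover have "G = (\<Sum>i\<in>B. b i powr p) - (\<Sum>i\<in>B. a powr p)" by (simp add: G_def sum_subtractf)
      ultimately show ?thesis by (simp add: Pf_def)
    qed
    have termB: "max (max (b i) ((a + b i) / 2)) A = b i" if "i \<in> B" for i
      using that Aa' by (auto simp: B_def)
    have termB': "max (max (b' i) ((a + b' i) / 2)) A' = a" if "i \<in> B" for i
      using b'B[OF that] A'A Aa' by simp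
    have NfB: "Nf a b = a powr p + (\<Sum>i\<in>B. b i powr p)
        + (\<Sum>i\<in>L - B. max (max (b i) ((a + b i) / 2)) A powr p)"
      unfolding Nf_def A_def[symmetric] using Aa' split termB by simp
    have NfB': "Nf a b' = a powr p + (\<Sum>i\<in>B. a powr p)
        + (\<Sum>i\<in>L - B. max (max (b i) ((a + b i) / 2)) A' powr p)"
    proof -
      have "max a A' = a" using A'A Aa' by simp
      moreover have "(\<Sum>i\<in>L - B. max (max (b' i) ((a + b' i) / 2)) A' powr p)
          = (\<Sum>i\<in>L - B. max (max (b i) ((a + b i) / 2)) A' powr p)"
        by (rule sum.cong) (auto simp: b'nB)
      ultimately show ?thesis
        unfolding Nf_def A'_def[symmetric] using split termB' by simp
    qed
    have diffLB: "(\<Sum>i\<in>L - B. max (max (b i) ((a + b i) / 2)) A powr p)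
        \<le> (\<Sum>i\<in>L - B. max (max (b i) ((a + b i) / 2)) A' powr p)
          + real (card (L - B)) * (A powr p - A' powr p)"
    proof -
      have "(\<Sum>i\<in>L - B. max (max (b i) ((a + b i) / 2)) A powr p)
          \<le> (\<Sum>i\<in>L - B. max (max (b i) ((a + b i) / 2)) A' powr p + (A powr p - A' powr p))"
        by (rule sum_mono, rule maxdiff[OF A'0 A'A]) (use b0 in \<open>auto simp: le_max_iff_disj\<close>)
      then show ?thesis by (simp add: sum.distrib)
    qed
    have Apos: "A > 0"
    proof -
      have "b i0 > 0" using i0 a0 by (auto simp: B_def)
      moreover have "b i0 \<le> sum b L"
        using i0 BL b0 finL by (intro member_le_sum) auto
      ultimately show ?thesis using a0 m2' by (simp add: A_def Av_def)
    qed
    have tanA: "A powr p - A' powr p \<le> p * A powr (p - 1) * (A - A')"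
      using tangent_powr[of p A A'] p1 Apos A'0 by (simp add: algebra_simps)
    have Apa: "A powr (p - 1) \<le> a powr (p - 1)" using Apos Aa' p1 by (simp add: powr_mono2)
    have tanA2: "A powr p - A' powr p \<le> p * a powr (p - 1) * E / (m + 1)"
    proof -
      have "p * A powr (p - 1) * (A - A') \<le> p * a powr (p - 1) * (A - A')"
        using Apa A'A p1 by (simp add: mult_left_mono mult_right_mono)
      then show ?thesis using tanA AA' by simp
    qed
    have pE: "p * a powr (p - 1) * E \<le> G"
    proof (cases "a = 0")
      case True
      then show ?thesis using G0 p1 by simp
    next
      case False
      then have apos: "a > 0" using a0 by simp
      have "p * a powr (p - 1) * E = (\<Sum>i\<in>B. p * a powr (p - 1) * (b i - a))"
        by (simp add: E_def sum_distrib_left)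
      also have "\<dots> \<le> G" unfolding G_def
      proof (rule sum_mono)
        fix i assume "i \<in> B"
        then have "0 \<le> b i" using b0 BL by auto
        then show "p * a powr (p - 1) * (b i - a) \<le> b i powr p - a powr p"
          using tangent_powr[of p a "b i"] p1 apos by simp
      qed
      finally show ?thesis .
    qed
    have cardLB: "real (card (L - B)) \<le> m - 1"
    proof -
      have "card B \<ge> 1" using False finB by (simp add: Suc_le_eq card_gt_0_iff)
      then show ?thesis using card_Diff_subset[OF finB BL] card_mono[OF finL BL]
        by (simp add: m_def of_nat_diff)
    qed
    have AAp0: "A powr p - A' powr p \<ge> 0" using A'0 A'A p1 by (simp add: powr_mono2)
    have step1: "real (card (L - B)) * (A powr p - A' powr p) \<le> (m - 1) * (G / (m + 1))"
    proof -
      have "real (card (L - B)) * (A powr p - A' powr p) \<le> (m - 1) * (A powr p - A' powr p)"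
        using cardLB AAp0 by (simp add: mult_right_mono)
      also have "\<dots> \<le> (m - 1) * (G / (m + 1))"
      proof (rule mult_left_mono)
        show "A powr p - A' powr p \<le> G / (m + 1)"
          using tanA2 pE m2' by (smt (verit) divide_right_mono)
      qed (use m2' in simp)
      finally show ?thesis .
    qed
    have mfrac: "(m - 1) / (m + 1) \<le> m / 4"
    proof -
      have "4 * (m - 1) \<le> m * (m + 1)"
      proof -
        have "(m - 2) * (m - 1) \<ge> 0" using m2' by simp
        then show ?thesis by (simp add: algebra_simps)
      qed
      then show ?thesis using m2' by (simp add: field_simps)
    qed
    have "Nf a b - Nf a b' \<le> G + (m - 1) * (G / (m + 1))"
      using NfB NfB' diffLB step1 by (simp add: G_def sum_subtractf)
    also have "\<dots> = (1 + (m - 1) / (m + 1)) * G" by (simp add: algebra_simps)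
    also have "\<dots> \<le> C * G"
    proof (rule mult_right_mono[OF _ G0])
      show "1 + (m - 1) / (m + 1) \<le> C" using mfrac C_ge unfolding m_def by linarith
    qed
    finally have "Nf a b - Nf a b' \<le> C * G" .
    then show ?thesis using cap Pdiff by (simp add: algebra_simps)
  qed
qed

lemma vertex_mean:
  assumes a0: "0 \<le> a" and b0: "\<And>i. i \<in> L \<Longrightarrow> 0 \<le> b i"
  shows "Av a b powr p \<le> Pf a b / (real (card L) + 1)"
proof -
  define m where "m = real (card L)"
  have m2': "m \<ge> 2" using m2 by (simp add: m_def)
  have Lne: "L \<noteq> {}" using m2 by auto
  define v where "v = sum b L / m"
  define w where "w = m / (m + 1)"
  have w0: "0 \<le> w" "w \<le> 1" using m2' by (auto simp: w_def)
  have v0: "0 \<le> v" using b0 m2' by (simp add: v_def sum_nonneg)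
  have "Av a b = (1 - w) * a + w * v"
  proof -
    have "1 - w = 1 / (m + 1)" using m2' by (simp add: w_def field_simps)
    moreover have "w * v = sum b L / (m + 1)" using m2' by (simp add: w_def v_def)
    ultimately show ?thesis by (simp add: Av_def m_def add_divide_distrib)
  qed
  then have "Av a b powr p \<le> (1 - w) * a powr p + w * v powr p"
    using convex2[of p w a v] p1 w0 a0 v0 by simp
  also have "\<dots> \<le> (1 - w) * a powr p + w * ((\<Sum>i\<in>L. b i powr p) / m)"
  proof -
    have "v powr p \<le> (\<Sum>i\<in>L. b i powr p) / m"
      using power_mean[of p L b] p1 finL Lne b0 by (simp add: v_def m_def)
    from mult_left_mono[OF this w0(1)] show ?thesis by simp
  qed
  also have "\<dots> = Pf a b / (m + 1)"
  proof -
    have "1 - w = 1 / (m + 1)" using m2' by (simp add: w_def field_simps)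
    moreover have "w * ((\<Sum>i\<in>L. b i powr p) / m) = (\<Sum>i\<in>L. b i powr p) / (m + 1)"
      using m2' by (simp add: w_def)
    ultimately show ?thesis by (simp add: Pf_def add_divide_distrib)
  qed
  finally show ?thesis by (simp add: m_def)
qed

lemma caseII:
  assumes a0: "0 \<le> a" and b0: "\<And>i. i \<in> L \<Longrightarrow> 0 \<le> b i" and aA: "a < Av a b"
  shows "Nf a b \<le> C * Pf a b"
proof -
  define m where "m = real (card L)"
  have m2': "m \<ge> 2" using m2 by (simp add: m_def)
  define A where "A = Av a b"
  have pp: "p \<ge> 1" using p1 by simp
  have A0: "0 \<le> A" using aA a0 by (simp add: A_def)
  have leaf: "max (max (b i) ((a + b i) / 2)) A = max (b i) A" if "i \<in> L" for i
    using aA b0[OF that] by (auto simp: A_def max_def)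
  have NfII: "Nf a b = A powr p + (\<Sum>i\<in>L. max (b i) A powr p)"
    unfolding Nf_def A_def[symmetric] using aA leaf by (simp add: A_def)
  have nA: "(m + 1) * A = a + sum b L" using m2' by (simp add: A_def Av_def m_def)
  have "\<exists>j\<in>L. A \<le> b j"
  proof (rule ccontr)
    assume "\<not> (\<exists>j\<in>L. A \<le> b j)"
    then have lt: "b i < A" if "i \<in> L" for i using that by (meson not_le)
    have "sum b L < (\<Sum>i\<in>L. A)"
      by (rule sum_strict_mono[OF finL]) (use m2 lt in auto)
    then have "sum b L < m * A" by (simp add: m_def)
    then show False using nA aA A_def by (simp add: algebra_simps)
  qed
  then obtain j where j: "j \<in> L" "A \<le> b j" by blast
  have VM: "A powr p \<le> Pf a b / (m + 1)" using vertex_mean[OF a0 b0] by (simp add: A_def m_def)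
  have P0: "0 \<le> Pf a b" by (simp add: Pf_def sum_nonneg)
  have ap0: "0 \<le> a powr p" by simp
  have Ch: "C \<ge> 1 + m * (1/2) powr p" using C_ge_h by (simp add: m_def)
  have C4: "C \<ge> 1 + m / 4" using C_ge by (simp add: m_def)
  have splitj: "sum g L = g j + sum g (L - {j})" for g :: "'a \<Rightarrow> real"
    using j(1) finL by (simp add: sum.remove)
  show ?thesis
  proof (cases "m \<ge> 3")
    case True
    have "(\<Sum>i\<in>L. max (b i) A powr p) \<le> (\<Sum>i\<in>L. b i powr p) + (m - 1) * A powr p"
    proof -
      have "(\<Sum>i\<in>L - {j}. max (b i) A powr p) \<le> (\<Sum>i\<in>L - {j}. b i powr p + A powr p)"
      proof (rule sum_mono)
        fix i assume "i \<in> L - {j}"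
        then have "0 \<le> b i" using b0 by auto
        then show "max (b i) A powr p \<le> b i powr p + A powr p"
          by (cases "b i \<le> A") (auto simp: max_def)
      qed
      also have "\<dots> = (\<Sum>i\<in>L - {j}. b i powr p) + (m - 1) * A powr p"
        using j(1) finL m2 by (simp add: sum.distrib m_def of_nat_diff)
      finally show ?thesis using splitj[of "\<lambda>i. max (b i) A powr p"] splitj[of "\<lambda>i. b i powr p"] j(2)
        by simp
    qed
    then have "Nf a b \<le> (\<Sum>i\<in>L. b i powr p) + m * A powr p" using NfII by (simp add: algebra_simps)
    also have "\<dots> \<le> Pf a b + m * (Pf a b / (m + 1))"
    proof -
      have "m * A powr p \<le> m * (Pf a b / (m + 1))" using mult_left_mono[OF VM] m2' by simp
      moreover have "(\<Sum>i\<in>L. b i powr p) \<le> Pf a b" using ap0 by (simp add: Pf_def)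
      ultimately show ?thesis by linarith
    qed
    also have "\<dots> \<le> Pf a b + m / 4 * Pf a b"
    proof -
      have "m * (Pf a b / (m + 1)) = m / (m + 1) * Pf a b" by simp
      also have "\<dots> \<le> m / 4 * Pf a b"
      proof (rule mult_right_mono[OF _ P0])
        show "m / (m + 1) \<le> m / 4" using True by (intro divide_left_mono) auto
      qed
      finally show ?thesis by simp
    qed
    also have "\<dots> = (1 + m / 4) * Pf a b" by (simp add: algebra_simps)
    also have "\<dots> \<le> C * Pf a b" using C4 P0 by (rule mult_right_mono)
    finally show ?thesis .
  next
    case False
    then have mm: "m = 2" using m2' m2 by (simp add: m_def)
    then have "card (L - {j}) = 1" using j(1) finL by (simp add: m_def)
    then obtain k where k: "L - {j} = {k}" by (auto simp: card_Suc_eq)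
    then have kL: "k \<in> L" and kj: "k \<noteq> j" by auto
    have sum2: "sum g L = g j + g k" for g :: "'a \<Rightarrow> real" using splitj k by simp
    have Pf2: "Pf a b = a powr p + b j powr p + b k powr p" by (simp add: Pf_def sum2)
    have NfII2: "Nf a b = A powr p + b j powr p + max (b k) A powr p"
      using NfII sum2 j(2) by simp
    show ?thesis
    proof (cases "A \<le> b k")
      case True
      have "Nf a b = A powr p + (b j powr p + b k powr p)" using NfII2 True by simp
      also have "\<dots> \<le> Pf a b / 3 + Pf a b"
      proof -
        have "A powr p \<le> Pf a b / 3" using VM mm by simp
        moreover have "b j powr p + b k powr p \<le> Pf a b" using Pf2 ap0 by simp
        ultimately show ?thesis by linarith
      qed
      also have "\<dots> \<le> C * Pf a b"
      proof -
        have "C \<ge> 3/2" using C4 mm by simp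
        then have "(4/3) * Pf a b \<le> C * Pf a b" using P0 by (intro mult_right_mono) auto
        then show ?thesis by simp
      qed
      finally show ?thesis .
    next
      case False
      have NA: "Nf a b = 2 * A powr p + b j powr p" using NfII2 False by simp
      have bj0: "0 \<le> b j" and bk0: "0 \<le> b k" using b0 j(1) kL by auto
      have Aeq: "A = (1 - 1/3) * (b j / 2) + (1/3) * (a + b k)"
        using nA mm sum2[of b] by (simp add: field_simps)
      have c1: "A powr p \<le> (1 - 1/3) * (b j / 2) powr p + (1/3) * (a + b k) powr p"
        unfolding Aeq by (rule convex2) (use pp a0 bj0 bk0 in auto)
      have c2: "(b j / 2) powr p = (1/2) powr p * b j powr p"
        using bj0 by (simp add: powr_mult[symmetric] mult.commute)
      have c3: "(a + b k) powr p \<le> 2 * (a powr p + b k powr p)"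
      proof -
        have "(a + b k) powr p = (2 * ((a + b k) / 2)) powr p"
          by (rule arg_cong[where f="\<lambda>x. x powr p"]) simp
        also have "\<dots> = 2 powr p * ((a + b k) / 2) powr p"
          using a0 bk0 by (intro powr_mult)
        also have "\<dots> \<le> 2 powr p * ((a powr p + b k powr p) / 2)"
          by (rule mult_left_mono, rule midpoint_powr) (use pp a0 bk0 in auto)
        also have "\<dots> \<le> 4 * ((a powr p + b k powr p) / 2)"
        proof (rule mult_right_mono)
          have "2 powr p \<le> (2::real) powr 2" using p2 by (intro powr_mono) auto
          moreover have "(2::real) powr 2 = 4" by (simp add: powr_numeral)
          ultimately show "2 powr p \<le> (4::real)" by simp
        qed simp
        finally show ?thesis by simp
      qed
      define X where "X = (1/2) powr p * b j powr p"
      define Y where "Y = a powr p + b k powr p"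
      have c1': "A powr p \<le> (2/3) * X + (1/3) * (a + b k) powr p" using c1 c2 by (simp add: X_def)
      have c3': "(a + b k) powr p \<le> 2 * Y" using c3 by (simp add: Y_def)
      have A2: "2 * A powr p \<le> (4/3) * ((1/2) powr p * b j powr p) + (4/3) * (a powr p + b k powr p)"
        using c1' c3' unfolding X_def[symmetric] Y_def[symmetric] by linarith
      have h0: "0 \<le> (1/2::real) powr p" by simp
      have "Nf a b \<le> (1 + (4/3) * (1/2) powr p) * b j powr p + (4/3) * (a powr p + b k powr p)"
        using NA A2 by (simp add: algebra_simps)
      also have "\<dots> \<le> C * b j powr p + C * (a powr p + b k powr p)"
      proof (rule add_mono)
        show "(1 + (4/3) * (1/2) powr p) * b j powr p \<le> C * b j powr p"
        proof (rule mult_right_mono)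
          show "1 + (4/3) * (1/2) powr p \<le> C" using Ch h0 unfolding mm by linarith
        qed simp
        show "(4/3) * (a powr p + b k powr p) \<le> C * (a powr p + b k powr p)"
          by (rule mult_right_mono) (use C4 mm in auto)
      qed
      also have "\<dots> = C * Pf a b" using Pf2 by (simp add: algebra_simps)
      finally show ?thesis .
    qed
  qed
qed

lemma main_ineq:
  assumes a0: "0 \<le> a" and b0: "\<And>i. i \<in> L \<Longrightarrow> 0 \<le> b i"
  shows "Nf a b \<le> C * Pf a b"
  using caseI[OF a0 b0] caseII[OF a0 b0] by fastforce

end



lemma walk_len1: "is_walk V E xs \<Longrightarrow> length xs = Suc 0 \<Longrightarrow> hd xs = last xs"
  by (cases xs) auto

lemma walk_len2: "is_walk V E xs \<Longrightarrow> length xs = Suc (Suc 0) \<Longrightarrow> E (hd xs) (last xs)"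
proof -
  assume w: "is_walk V E xs" and l: "length xs = Suc (Suc 0)"
  then obtain x y where "xs = [x, y]"
    by (metis length_0_conv length_Suc_conv)
  moreover have "E (xs ! 0) (xs ! Suc 0)" using w l by (simp add: is_walk_def)
  ultimately show ?thesis by simp
qed

lemma dist_self:
  assumes "v \<in> V" shows "graph_dist V E v v = 0"
proof -
  have "is_walk V E [v]" using assms by (simp add: is_walk_def)
  then show ?thesis unfolding graph_dist_def
    by (intro Least_eq_0) (rule exI[of _ "[v]"], simp)
qed

lemma dist_ge1:
  assumes "u \<noteq> v" "\<exists>xs. is_walk V E xs \<and> hd xs = u \<and> last xs = v \<and> length xs = Suc k"
  shows "k \<ge> 1"
  using assms walk_len1 by (cases k) force+

lemma star_walk1: assumes "2 \<le> j" "j \<le> n"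
  shows "is_walk (star_V n) (star_E n) [1, j]" "is_walk (star_V n) (star_E n) [j, 1]"
  using assms by (auto simp: is_walk_def star_V_def star_E_def less_Suc_eq)

lemma star_walk2: assumes "2 \<le> i" "i \<le> n" "2 \<le> j" "j \<le> n"
  shows "is_walk (star_V n) (star_E n) [i, 1, j]"
  using assms by (auto simp: is_walk_def star_V_def star_E_def less_Suc_eq nth_Cons')

lemma dist_cl:
  assumes "2 \<le> j" "j \<le> n"
  shows "graph_dist (star_V n) (star_E n) 1 j = 1" "graph_dist (star_V n) (star_E n) j 1 = 1"
proof -
  show "graph_dist (star_V n) (star_E n) 1 j = 1" unfolding graph_dist_def
  proof (rule Least_equality)
    show "\<exists>xs. is_walk (star_V n) (star_E n) xs \<and> hd xs = 1 \<and> last xs = j \<and> length xs = Suc 1"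
      using star_walk1[OF assms] by (intro exI[of _ "[1, j]"]) simp
  next
    fix k assume "\<exists>xs. is_walk (star_V n) (star_E n) xs \<and> hd xs = 1 \<and> last xs = j \<and> length xs = Suc k"
    then show "1 \<le> k" using dist_ge1[of 1 j] assms by auto
  qed
  show "graph_dist (star_V n) (star_E n) j 1 = 1" unfolding graph_dist_def
  proof (rule Least_equality)
    show "\<exists>xs. is_walk (star_V n) (star_E n) xs \<and> hd xs = j \<and> last xs = 1 \<and> length xs = Suc 1"
      using star_walk1[OF assms] by (intro exI[of _ "[j, 1]"]) simp
  next
    fix k assume "\<exists>xs. is_walk (star_V n) (star_E n) xs \<and> hd xs = j \<and> last xs = 1 \<and> length xs = Suc k"
    then show "1 \<le> k" using dist_ge1[of j 1] assms by auto
  qed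
qed

lemma dist_ll:
  assumes "2 \<le> i" "i \<le> n" "2 \<le> j" "j \<le> n" "i \<noteq> j"
  shows "graph_dist (star_V n) (star_E n) i j = 2"
  unfolding graph_dist_def
proof (rule Least_equality)
  show "\<exists>xs. is_walk (star_V n) (star_E n) xs \<and> hd xs = i \<and> last xs = j \<and> length xs = Suc 2"
    using star_walk2[OF assms(1-4)] by (intro exI[of _ "[i, 1, j]"]) simp
next
  fix k assume H: "\<exists>xs. is_walk (star_V n) (star_E n) xs \<and> hd xs = i \<and> last xs = j \<and> length xs = Suc k"
  show "2 \<le> k"
  proof (rule ccontr)
    assume "\<not> 2 \<le> k"
    then have "k = 0 \<or> k = 1" by auto
    then show False
    proof
      assume "k = 0" then show False using dist_ge1[OF assms(5) H] by simp
    next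
      assume k1: "k = 1"
      obtain xs where xs: "is_walk (star_V n) (star_E n) xs" "hd xs = i" "last xs = j" "length xs = Suc (Suc 0)"
        using H k1 by auto
      then have "star_E n i j" using walk_len2 by metis
      then show False using assms by (simp add: star_E_def)
    qed
  qed
qed

lemma dist_to_center:
  assumes "u \<in> star_V n"
  shows "graph_dist (star_V n) (star_E n) u 1 = (if u = 1 then 0 else 1)"
  using assms dist_self[of 1 "star_V n" "star_E n"] dist_cl[of u n]
  by (auto simp: star_V_def)

lemma ball_center:
  assumes "1 \<le> n" "0 \<le> r"
  shows "graph_ball (star_V n) (star_E n) 1 r = (if r < 1 then {1} else {1..n})"
proof -
  have "u \<in> graph_ball (star_V n) (star_E n) 1 r \<longleftrightarrow>
        u \<in> (if r < 1 then {1} else {1..n})" for u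
  proof (cases "u \<in> star_V n")
    case True
    have "u \<in> graph_ball (star_V n) (star_E n) 1 r \<longleftrightarrow> real (if u = 1 then 0 else 1) \<le> r"
      using True dist_to_center[OF True] by (simp add: graph_ball_def)
    then show ?thesis using assms True by (auto simp: star_V_def)
  next
    case False
    then show ?thesis using assms by (auto simp: graph_ball_def star_V_def)
  qed
  then show ?thesis by blast
qed

lemma dist_to_leaf:
  assumes "u \<in> star_V n" "2 \<le> j" "j \<le> n"
  shows "graph_dist (star_V n) (star_E n) u j = (if u = j then 0 else if u = 1 then 1 else 2)"
proof -
  have "u = j \<or> u = 1 \<or> (2 \<le> u \<and> u \<le> n \<and> u \<noteq> j)" using assms by (auto simp: star_V_def)
  then show ?thesis
    using assms dist_self[of j "star_V n" "star_E n"] dist_cl[of j n] dist_ll[of u n j]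
    by (auto simp: star_V_def)
qed

lemma ball_leaf:
  assumes "2 \<le> j" "j \<le> n" "0 \<le> r"
  shows "graph_ball (star_V n) (star_E n) j r = (if r < 1 then {j} else if r < 2 then {1, j} else {1..n})"
proof -
  have "u \<in> graph_ball (star_V n) (star_E n) j r \<longleftrightarrow>
        u \<in> (if r < 1 then {j} else if r < 2 then {1, j} else {1..n})" for u
  proof (cases "u \<in> star_V n")
    case True
    have "u \<in> graph_ball (star_V n) (star_E n) j r \<longleftrightarrow> real (if u = j then 0 else if u = 1 then 1 else 2) \<le> r"
      using True dist_to_leaf[OF True assms(1,2)] by (simp add: graph_ball_def)
    then show ?thesis using assms True by (auto simp: star_V_def)
  next
    case False
    then show ?thesis using assms by (auto simp: graph_ball_def star_V_def)
  qed
  then show ?thesis by blast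
qed

lemma mf_center:
  assumes "1 \<le> n"
  shows "maximal_fun (star_V n) (star_E n) f 1 = max \<bar>f 1\<bar> ((\<Sum>u\<in>{1..n}. \<bar>f u\<bar>) / real n)"
proof -
  define A where "A = (\<Sum>u\<in>{1..n}. \<bar>f u\<bar>) / real n"
  define h where "h = (\<lambda>r::real. if r < 1 then \<bar>f 1\<bar> else A)"
  have g: "(\<Sum>u\<in>graph_ball (star_V n) (star_E n) 1 r. \<bar>f u\<bar>) / real (card (graph_ball (star_V n) (star_E n) 1 r))
      = h r" if "r \<in> {0..}" for r
    using that assms unfolding ball_center[OF assms that[simplified]] by (simp add: A_def h_def)
  have "maximal_fun (star_V n) (star_E n) f 1 = Sup (h ` {0..})"
    unfolding maximal_fun_def by (rule SUP_cong) (use g in auto)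
  also have "\<dots> = max \<bar>f 1\<bar> A"
  proof (rule cSup_eq_maximum)
    have a: "\<bar>f 1\<bar> \<in> h ` {0..}" by (rule image_eqI[of _ _ 0]) (simp_all add: h_def)
    have b: "A \<in> h ` {0..}" by (rule image_eqI[of _ _ 1]) (simp_all add: h_def)
    show "max \<bar>f 1\<bar> A \<in> h ` {0..}" using a b by (simp add: max_def)
  next
    fix x assume "x \<in> h ` {0..}"
    then show "x \<le> max \<bar>f 1\<bar> A" by (auto simp: h_def)
  qed
  finally show ?thesis by (simp add: A_def)
qed

lemma mf_leaf:
  assumes "2 \<le> j" "j \<le> n"
  shows "maximal_fun (star_V n) (star_E n) f j =
    max (max \<bar>f j\<bar> ((\<bar>f 1\<bar> + \<bar>f j\<bar>) / 2)) ((\<Sum>u\<in>{1..n}. \<bar>f u\<bar>) / real n)"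
proof -
  define A where "A = (\<Sum>u\<in>{1..n}. \<bar>f u\<bar>) / real n"
  define h where "h = (\<lambda>r::real. if r < 1 then \<bar>f j\<bar> else if r < 2 then (\<bar>f 1\<bar> + \<bar>f j\<bar>) / 2 else A)"
  have j1: "j \<noteq> 1" using assms by simp
  have g: "(\<Sum>u\<in>graph_ball (star_V n) (star_E n) j r. \<bar>f u\<bar>) / real (card (graph_ball (star_V n) (star_E n) j r))
      = h r" if "r \<in> {0..}" for r
    using that assms j1 unfolding ball_leaf[OF assms that[simplified]] by (simp add: h_def A_def)
  have "maximal_fun (star_V n) (star_E n) f j = Sup (h ` {0..})"
    unfolding maximal_fun_def by (rule SUP_cong) (use g in auto)
  also have "\<dots> = max (max \<bar>f j\<bar> ((\<bar>f 1\<bar> + \<bar>f j\<bar>) / 2)) A"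
  proof (rule cSup_eq_maximum)
    have a: "\<bar>f j\<bar> \<in> h ` {0..}" by (rule image_eqI[of _ _ 0]) (simp_all add: h_def)
    have b: "(\<bar>f 1\<bar> + \<bar>f j\<bar>) / 2 \<in> h ` {0..}" by (rule image_eqI[of _ _ 1]) (simp_all add: h_def)
    have c: "A \<in> h ` {0..}" by (rule image_eqI[of _ _ 2]) (simp_all add: h_def)
    show "max (max \<bar>f j\<bar> ((\<bar>f 1\<bar> + \<bar>f j\<bar>) / 2)) A \<in> h ` {0..}"
      using a b c by (simp add: max_def)
  next
    fix x assume "x \<in> h ` {0..}"
    then obtain r where "x = h r" by auto
    then show "x \<le> max (max \<bar>f j\<bar> ((\<bar>f 1\<bar> + \<bar>f j\<bar>) / 2)) A"
      unfolding h_def by (simp only: if_split_asm le_max_iff_disj) (auto split: if_splits)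
  qed
  finally show ?thesis by (simp add: A_def)
qed


lemma sum_V_split:
  fixes n :: nat and g :: "nat \<Rightarrow> real"
  assumes "1 \<le> n"
  shows "(\<Sum>u\<in>{1..n}. g u) = g 1 + (\<Sum>u\<in>{2..n}. g u)"
  using sum.atLeast_Suc_atMost[OF assms, of g] by (simp add: numeral_2_eq_2)

theorem theorem2p4:
  fixes n :: nat and p :: real
  assumes "n \<ge> 3" and "1 < p" and "p \<le> 2"
  shows "maximal_op_norm (star_V n) (star_E n) p =
    (SUP x \<in> {0..<1::real}. (1 + real (n - 1) * ((x + 1) / 2) powr p) / (1 + real (n - 1) * x powr p))
      powr (1 / p)"
proof -
  define m where "m = real (n - 1)"
  define Cf where "Cf = (\<lambda>x::real. (1 + m * ((x + 1) / 2) powr p) / (1 + m * x powr p))"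
  define C where "C = (SUP x \<in> {0..<1::real}. Cf x)"
  define V where "V = star_V n"
  define E where "E = star_E n"
  define L where "L = {2..n}"
  have n1: "1 \<le> n" using assms by simp
  have m2: "m \<ge> 2" using assms by (simp add: m_def)
  have cardL: "card L = n - 1" by (simp add: L_def)
  have mL: "real (card L) = m" by (simp add: cardL m_def)
  have realn: "real n = m + 1" using n1 by (simp add: m_def of_nat_diff)
  have Cf_bound: "Cf x \<le> 1 + m" if "0 \<le> x" "x < 1" for x
  proof -
    have "((x + 1) / 2) powr p \<le> 1" using that assms by (intro powr_le1) auto
    then have num: "1 + m * ((x + 1) / 2) powr p \<le> 1 + m" using m2 by (simp add: mult_left_le)
    have den: "1 \<le> 1 + m * x powr p" using m2 by simp
    have "Cf x \<le> (1 + m * ((x + 1) / 2) powr p) / 1"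
    proof -
      have den0: "0 < (1 + m * x powr p) * 1" using den by simp
      have nn: "0 \<le> 1 + m * ((x + 1) / 2) powr p" using m2 by simp
      show ?thesis unfolding Cf_def by (rule divide_left_mono[OF den nn den0])
    qed
    then show ?thesis using num by simp
  qed
  have bddC: "bdd_above (Cf ` {0..<1})"
    by (rule bdd_aboveI[of _ "1 + m"]) (use Cf_bound in auto)
  have CfC: "Cf x \<le> C" if "x \<in> {0..<1}" for x
    unfolding C_def by (rule cSUP_upper[OF that bddC])
  have HC: "1 + real (card L) * ((x + 1) / 2) powr p \<le> C * (1 + real (card L) * x powr p)"
    if "0 \<le> x" "x < 1" for x
  proof -
    have den: "0 < 1 + m * x powr p" using m2 by (simp add: add_pos_nonneg)
    have "Cf x \<le> C" using CfC that by simp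
    then show ?thesis using den unfolding Cf_def mL by (simp add: divide_le_eq)
  qed
  interpret SI: star_ineq L p C
    by unfold_locales (use assms cardL HC in \<open>auto simp: L_def\<close>)
  have Cpos: "C \<ge> 1" by (rule SI.C_ge1)
  have key: "(\<Sum>v\<in>V. \<bar>maximal_fun V E f v\<bar> powr p) \<le> C * (\<Sum>v\<in>V. \<bar>f v\<bar> powr p)" for f
  proof -
    define a where "a = \<bar>f 1\<bar>"
    define b where "b = (\<lambda>i. \<bar>f i\<bar>)"
    have Aeq: "(\<Sum>u\<in>{1..n}. \<bar>f u\<bar>) / real n = SI.Av a b"
      unfolding SI.Av_def using sum_V_split[OF n1, of "\<lambda>u. \<bar>f u\<bar>"] realn mL
      by (simp add: a_def b_def L_def)
    have mfc: "maximal_fun V E f 1 = max a (SI.Av a b)"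
      unfolding V_def E_def mf_center[OF n1] Aeq by (simp add: a_def)
    have mfl: "maximal_fun V E f j = max (max (b j) ((a + b j) / 2)) (SI.Av a b)" if "j \<in> L" for j
    proof -
      have j: "2 \<le> j" "j \<le> n" using that by (auto simp: L_def)
      have "maximal_fun V E f j = max (max \<bar>f j\<bar> ((\<bar>f 1\<bar> + \<bar>f j\<bar>) / 2)) ((\<Sum>u\<in>{1..n}. \<bar>f u\<bar>) / real n)"
        unfolding V_def E_def by (rule mf_leaf[OF j])
      then show ?thesis unfolding Aeq by (simp add: a_def b_def)
    qed
    have nn: "0 \<le> SI.Av a b" unfolding SI.Av_def
      by (simp add: a_def b_def sum_nonneg)
    have "(\<Sum>v\<in>V. \<bar>maximal_fun V E f v\<bar> powr p)
        = \<bar>maximal_fun V E f 1\<bar> powr p + (\<Sum>v\<in>L. \<bar>maximal_fun V E f v\<bar> powr p)"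
      unfolding V_def star_V_def L_def by (rule sum_V_split[OF n1])
    also have "\<dots> = SI.Nf a b"
    proof -
      have "\<bar>maximal_fun V E f 1\<bar> = max a (SI.Av a b)" using mfc nn by (simp add: a_def)
      moreover have "(\<Sum>v\<in>L. \<bar>maximal_fun V E f v\<bar> powr p)
          = (\<Sum>i\<in>L. max (max (b i) ((a + b i) / 2)) (SI.Av a b) powr p)"
        by (rule sum.cong) (use mfl nn in \<open>auto simp: a_def b_def\<close>)
      ultimately show ?thesis by (simp add: SI.Nf_def)
    qed
    also have "\<dots> \<le> C * SI.Pf a b"
      by (rule SI.main_ineq) (simp_all add: a_def b_def)
    also have "SI.Pf a b = (\<Sum>v\<in>V. \<bar>f v\<bar> powr p)"
      unfolding SI.Pf_def V_def star_V_def sum_V_split[OF n1] by (simp add: a_def b_def L_def)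
    finally show ?thesis .
  qed
  define F where "F = {f::nat \<Rightarrow> real. \<exists>v\<in>V. f v \<noteq> 0}"
  define ratio where "ratio = (\<lambda>f. pnorm V p (maximal_fun V E f) / pnorm V p f)"
  define R where "R = maximal_op_norm V E p"
  have R_alt: "R = Sup (ratio ` F)" by (simp add: R_def maximal_op_norm_def F_def ratio_def)
  have finV: "finite V" by (simp add: V_def star_V_def)
  have p0: "0 < p" using assms by simp
  have ub: "ratio f \<le> C powr (1 / p)" if fF: "f \<in> F" for f
  proof -
    define P where "P = (\<Sum>v\<in>V. \<bar>f v\<bar> powr p)"
    obtain v where v: "v \<in> V" "f v \<noteq> 0" using fF by (auto simp: F_def)
    have "\<bar>f v\<bar> powr p \<le> P" unfolding P_def by (rule member_le_sum) (use v finV in auto)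
    moreover have "\<bar>f v\<bar> powr p > 0" using v by simp
    ultimately have Ppos: "P > 0" by linarith
    have N0: "0 \<le> (\<Sum>v\<in>V. \<bar>maximal_fun V E f v\<bar> powr p)" by (simp add: sum_nonneg)
    have "pnorm V p (maximal_fun V E f) \<le> (C * P) powr (1 / p)"
      unfolding pnorm_def P_def by (rule powr_mono2) (use p0 N0 key in auto)
    also have "\<dots> = C powr (1 / p) * P powr (1 / p)"
      using Cpos Ppos by (simp add: powr_mult)
    finally have num: "pnorm V p (maximal_fun V E f) \<le> C powr (1 / p) * P powr (1 / p)" .
    have den: "pnorm V p f = P powr (1 / p)" by (simp add: pnorm_def P_def)
    have dpos: "P powr (1 / p) > 0" using Ppos by simp
    show ?thesis unfolding ratio_def den using num dpos by (simp add: divide_le_eq)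
  qed
  have oneV: "1 \<in> V" using n1 by (simp add: V_def star_V_def)
  have oneF: "(\<lambda>_. 1) \<in> F" using oneV by (auto simp: F_def)
  have bddR: "bdd_above (ratio ` F)" by (rule bdd_aboveI[of _ "C powr (1 / p)"]) (use ub in auto)
  have R_le: "R \<le> C powr (1 / p)" unfolding R_alt
    by (rule cSUP_least) (use oneF ub in auto)
  have lower: "Cf x powr (1 / p) \<le> R" if x: "0 \<le> x" "x < 1" for x
  proof -
    define fx where "fx = (\<lambda>i::nat. if i = 1 then 1 else x)"
    have fxF: "fx \<in> F" using oneV by (auto simp: F_def fx_def)
    have sumL: "(\<Sum>u\<in>{2..n}. g u) = m * c" if "\<And>u. u \<in> {2..n} \<Longrightarrow> g u = c" for g c
    proof -
      have "(\<Sum>u\<in>{2..n}. g u) = (\<Sum>u\<in>{2..n}. c)" by (rule sum.cong) (use that in auto)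
      then show ?thesis using mL by (simp add: L_def)
    qed
    have fxL: "fx u = x" if "u \<in> {2..n}" for u using that by (auto simp: fx_def)
    have sumfx: "(\<Sum>u\<in>{1..n}. \<bar>fx u\<bar>) = 1 + m * x"
      unfolding sum_V_split[OF n1] using sumL[of "\<lambda>u. \<bar>fx u\<bar>" x] fxL x by (simp add: fx_def)
    define A where "A = (1 + m * x) / real n"
    have A1: "A \<le> 1" using x m2 realn by (simp add: A_def field_simps)
    have Ax: "A \<le> (1 + x) / 2"
    proof -
      have "(m - 1) * x \<le> (m - 1) * 1" using x m2 by (intro mult_left_mono) auto
      then have "2 * (1 + m * x) \<le> (m + 1) * (1 + x)" by (simp add: algebra_simps)
      then show ?thesis using m2 realn by (simp add: A_def field_simps)
    qed
    have mc: "maximal_fun V E fx 1 = 1"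
      unfolding V_def E_def mf_center[OF n1] sumfx A_def[symmetric] using A1 by (simp add: fx_def)
    have ml: "maximal_fun V E fx j = (1 + x) / 2" if "j \<in> {2..n}" for j
    proof -
      have j: "2 \<le> j" "j \<le> n" using that by auto
      have "maximal_fun V E fx j = max (max \<bar>fx j\<bar> ((\<bar>fx 1\<bar> + \<bar>fx j\<bar>) / 2)) ((\<Sum>u\<in>{1..n}. \<bar>fx u\<bar>) / real n)"
        unfolding V_def E_def by (rule mf_leaf[OF j])
      also have "\<dots> = max (max x ((1 + x) / 2)) A"
        unfolding sumfx A_def[symmetric] using fxL[OF that] x by (simp add: fx_def)
      also have "\<dots> = (1 + x) / 2" using Ax x by simp
      finally show ?thesis .
    qed
    have N: "(\<Sum>v\<in>V. \<bar>maximal_fun V E fx v\<bar> powr p) = 1 + m * ((x + 1) / 2) powr p"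
    proof -
      have "(\<Sum>v\<in>V. \<bar>maximal_fun V E fx v\<bar> powr p)
          = \<bar>maximal_fun V E fx 1\<bar> powr p + (\<Sum>v\<in>{2..n}. \<bar>maximal_fun V E fx v\<bar> powr p)"
        unfolding V_def star_V_def by (rule sum_V_split[OF n1])
      also have "(\<Sum>v\<in>{2..n}. \<bar>maximal_fun V E fx v\<bar> powr p) = m * ((x + 1) / 2) powr p"
      proof (rule sumL)
        fix u assume u: "u \<in> {2..n}"
        have e: "maximal_fun V E fx u = (x + 1) / 2" using ml[OF u] by (simp only: add.commute)
        have "\<bar>(x + 1) / 2\<bar> = (x + 1) / 2" using x by simp
        then show "\<bar>maximal_fun V E fx u\<bar> powr p = ((x + 1) / 2) powr p" unfolding e by simp
      qed
      also have "\<bar>maximal_fun V E fx 1\<bar> powr p = 1" using mc by simp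
      finally show ?thesis .
    qed
    have D: "(\<Sum>v\<in>V. \<bar>fx v\<bar> powr p) = 1 + m * x powr p"
    proof -
      have "(\<Sum>v\<in>V. \<bar>fx v\<bar> powr p) = \<bar>fx 1\<bar> powr p + (\<Sum>v\<in>{2..n}. \<bar>fx v\<bar> powr p)"
        unfolding V_def star_V_def by (rule sum_V_split[OF n1])
      also have "\<dots> = 1 + m * x powr p"
        using sumL[of "\<lambda>v. \<bar>fx v\<bar> powr p" "x powr p"] fxL x by (simp add: fx_def)
      finally show ?thesis .
    qed
    have "ratio fx = (1 + m * ((x + 1) / 2) powr p) powr (1 / p) / (1 + m * x powr p) powr (1 / p)"
      unfolding ratio_def pnorm_def N D ..
    also have "\<dots> = Cf x powr (1 / p)"
      unfolding Cf_def using m2 by (simp add: powr_divide)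
    finally have "Cf x powr (1 / p) = ratio fx" by simp
    also have "\<dots> \<le> R" unfolding R_alt by (rule cSUP_upper[OF fxF bddR])
    finally show ?thesis .
  qed
  have Cf0: "0 \<le> Cf x" if "0 \<le> x" for x using m2 that by (simp add: Cf_def)
  have R0: "0 \<le> R" using lower[of 0] by (smt (verit) powr_ge_zero)
  have CfR: "Cf x \<le> R powr p" if "x \<in> {0..<1}" for x
  proof -
    have "(Cf x powr (1 / p)) powr p \<le> R powr p"
      by (rule powr_mono2) (use p0 lower that in auto)
    moreover have "(Cf x powr (1 / p)) powr p = Cf x"
      using Cf0[of x] that p0 by (simp add: powr_powr)
    ultimately show ?thesis by simp
  qed
  have CR: "C \<le> R powr p" unfolding C_def by (rule cSUP_least) (use CfR in auto)
  have "C powr (1 / p) \<le> (R powr p) powr (1 / p)"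
    by (rule powr_mono2) (use p0 CR Cpos in auto)
  also have "\<dots> = R" using R0 p0 by (simp add: powr_powr)
  finally have "R = C powr (1 / p)" using R_le by simp
  then show ?thesis unfolding R_def C_def Cf_def m_def V_def E_def .
qed

end
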